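(* Let $\mathcal A\in\mathbb C^{n\times n}$ be nonsingular and suppose $\mathcal A=\mathcal P_1+\mathcal P_2$ with $\mathcal P_1,\mathcal P_2$ positive semidefinite, and let $\Sigma$ be Hermitian positive definite. Let $\tilde{\mathcal A}=\Sigma^{-1/2}\mathcal A\Sigma^{-1/2}$, $\tilde{\mathcal P}_i=\Sigma^{-1/2}\mathcal P_i\Sigma^{-1/2}$ ($i=1,2$), and $K=\tilde{\mathcal A}+\tilde{\mathcal P}_1^*\tilde{\mathcal P}_2^*\tilde{\mathcal A}$. If $K$ is positive definite, then the PPS method is convergent, i.e. $\rho(\Gamma_{\mathrm{PPS}})<1$, where $\Gamma_{\mathrm{PPS}}=(\Sigma+\mathcal P_1)^{-1}(\Sigma-\mathcal P_2)(\Sigma+\mathcal P_2)^{-1}(\Sigma-\mathcal P_1)$.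
   Context: A matrix $\mathcal P\in\mathbb C^{n\times n}$ is called positive semidefinite if $\mathcal P+\mathcal P^*$ is Hermitian positive semidefinite, and positive definite if $\mathcal P+\mathcal P^*$ is Hermitian positive definite; $\mathcal P$ need not be Hermitian. $\rho(\cdot)$ is the spectral radius; $\Sigma^{1/2}$ is the HPD square root of the HPD matrix $\Sigma$. The PPS method is the iteration $(\Sigma+\mathcal P_2)u^{k+1/2}=(\Sigma-\mathcal P_1)u^k+b$, $(\Sigma+\mathcal P_1)u^{k+1}=(\Sigma-\mathcal P_2)u^{k+1/2}+b$ for solving $\mathcal A u=b$; its iteration matrix is $\Gamma_{\mathrm{PPS}}$, and it converges for every initial guess iff $\rho(\Gamma_{\mathrm{PPS}})<1$. *)

theory Defs
  imports "Jordan_Normal_Form.Spectral_Radius" "Jordan_Normal_Form.Schur_Decomposition"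
begin

abbreviation adj :: "complex mat \<Rightarrow> complex mat" where
  "adj A \<equiv> mat_adjoint A"

(* Hermitian positive (semi)definite n x n matrices; x^* H x = (H x) \<bullet>c x *)
definition hpd :: "nat \<Rightarrow> complex mat \<Rightarrow> bool" where
  "hpd n H \<longleftrightarrow> H \<in> carrier_mat n n \<and> mat_adjoint H = H \<and>
     (\<forall>x \<in> carrier_vec n. x \<noteq> 0\<^sub>v n \<longrightarrow> 0 < Re ((H *\<^sub>v x) \<bullet>c x))"

definition hpsd :: "nat \<Rightarrow> complex mat \<Rightarrow> bool" where
  "hpsd n H \<longleftrightarrow> H \<in> carrier_mat n n \<and> mat_adjoint H = H \<and>
     (\<forall>x \<in> carrier_vec n. 0 \<le> Re ((H *\<^sub>v x) \<bullet>c x))"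

(* the paper's (possibly non-Hermitian) notions: P + P^* is HPSD / HPD *)
definition pos_semidef :: "nat \<Rightarrow> complex mat \<Rightarrow> bool" where
  "pos_semidef n P \<longleftrightarrow> P \<in> carrier_mat n n \<and> hpsd n (P + mat_adjoint P)"

definition pos_def :: "nat \<Rightarrow> complex mat \<Rightarrow> bool" where
  "pos_def n P \<longleftrightarrow> P \<in> carrier_mat n n \<and> hpd n (P + mat_adjoint P)"

definition minv :: "complex mat \<Rightarrow> complex mat" where
  "minv A = (THE B. B \<in> carrier_mat (dim_row A) (dim_row A) \<and>
                    A * B = 1\<^sub>m (dim_row A) \<and> B * A = 1\<^sub>m (dim_row A))"

definition hpd_sqrt :: "complex mat \<Rightarrow> complex mat" where
  "hpd_sqrt S = (THE R. hpd (dim_row S) R \<and> R * R = S)"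

definition inv_sqrt :: "complex mat \<Rightarrow> complex mat" where
  "inv_sqrt S = minv (hpd_sqrt S)"

definition Gamma_PPS :: "complex mat \<Rightarrow> complex mat \<Rightarrow> complex mat \<Rightarrow> complex mat" where
  "Gamma_PPS \<Sigma> P1 P2 = minv (\<Sigma> + P1) * (\<Sigma> - P2) * minv (\<Sigma> + P2) * (\<Sigma> - P1)"

end

theory Submission imports Defs begin

lemma adj_dims[simp]: "dim_row (adj A) = dim_col A" "dim_col (adj A) = dim_row A"
  unfolding mat_adjoint_def by auto

lemma adj_index[simp]: "i < dim_col A \<Longrightarrow> j < dim_row A \<Longrightarrow> adj A $$ (i,j) = cnj (A $$ (j,i))"
  unfolding mat_adjoint_def by (simp add: mat_of_rows_index)

lemma adj_carrier[simp]: "A \<in> carrier_mat n m \<Longrightarrow> adj A \<in> carrier_mat m n"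
  unfolding carrier_mat_def by simp

lemma adj_adj[simp]: "adj (adj A) = A"
  by (rule eq_matI, auto)

lemma adj_mult: assumes "A \<in> carrier_mat n m" "B \<in> carrier_mat m k"
  shows "adj (A * B) = adj B * adj A"
proof (rule eq_matI)
  fix i j assume i: "i < dim_row (adj B * adj A)" and j: "j < dim_col (adj B * adj A)"
  show "adj (A * B) $$ (i, j) = (adj B * adj A) $$ (i, j)"
    using assms i j by (simp add: scalar_prod_def sum_conjugate mult.commute)
qed (use assms in auto)

lemma adj_add: assumes "A \<in> carrier_mat n m" "B \<in> carrier_mat n m"
  shows "adj (A + B) = adj A + adj B"
  by (rule eq_matI, use assms in auto)

lemma adj_minus: assumes "A \<in> carrier_mat n m" "B \<in> carrier_mat n m"
  shows "adj (A - B) = adj A - adj B"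
  by (rule eq_matI, use assms in auto)

lemma adj_one[simp]: "adj (1\<^sub>m n) = 1\<^sub>m n"
  by (rule eq_matI, auto)

lemma adj_zero[simp]: "adj (0\<^sub>m n m) = 0\<^sub>m m n"
  by (rule eq_matI, auto)

lemma adj_smult: "adj (c \<cdot>\<^sub>m A) = cnj c \<cdot>\<^sub>m adj A"
  by (rule eq_matI, auto)

lemma adj_inner: assumes A: "A \<in> carrier_mat n m" and x: "x \<in> carrier_vec m" and y: "y \<in> carrier_vec n"
  shows "(A *\<^sub>v x) \<bullet>c y = x \<bullet>c (adj A *\<^sub>v y)"
proof -
  have "(A *\<^sub>v x) \<bullet>c y = (\<Sum>i<n. (\<Sum>j<m. A $$ (i,j) * x $ j) * cnj (y $ i))"
    using A x y by (simp add: scalar_prod_def mult_mat_vec_def row_def lessThan_atLeast0)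
  also have "\<dots> = (\<Sum>i<n. \<Sum>j<m. A $$ (i,j) * x $ j * cnj (y $ i))"
    by (simp add: sum_distrib_right)
  also have "\<dots> = (\<Sum>j<m. \<Sum>i<n. A $$ (i,j) * x $ j * cnj (y $ i))"
    by (rule sum.swap)
  also have "\<dots> = (\<Sum>j<m. x $ j * (\<Sum>i<n. A $$ (i,j) * cnj (y $ i)))"
    by (simp add: sum_distrib_left mult_ac)
  also have "\<dots> = (\<Sum>j<m. x $ j * cnj (\<Sum>i<n. cnj (A $$ (i,j)) * y $ i))"
    by simp
  also have "\<dots> = x \<bullet>c (adj A *\<^sub>v y)"
    using A x y by (simp add: scalar_prod_def mult_mat_vec_def row_def lessThan_atLeast0)
  finally show ?thesis .
qed


lemma cscalar_smult: fixes v w :: "complex vec"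
  assumes "v \<in> carrier_vec n" "w \<in> carrier_vec n"
  shows "(a \<cdot>\<^sub>v v) \<bullet>c (b \<cdot>\<^sub>v w) = a * cnj b * (v \<bullet>c w)"
  using assms by (simp add: scalar_prod_def sum_distrib_left mult_ac)

lemma cscalar_self_pos: fixes w :: "complex vec"
  assumes "w \<in> carrier_vec n" "w \<noteq> 0\<^sub>v n"
  shows "Im (w \<bullet>c w) = 0" "Re (w \<bullet>c w) > 0"
proof -
  have "w \<bullet>c w > 0" using assms by simp
  thus "Im (w \<bullet>c w) = 0" "Re (w \<bullet>c w) > 0" by (auto simp: less_complex_def)
qed

definition nrmlz :: "complex vec \<Rightarrow> complex vec" where
  "nrmlz w = complex_of_real (1 / sqrt (Re (w \<bullet>c w))) \<cdot>\<^sub>v w"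

lemma nrmlz: fixes w :: "complex vec"
  assumes w: "w \<in> carrier_vec n" "w \<noteq> 0\<^sub>v n"
  shows "nrmlz w \<bullet>c nrmlz w = 1" "nrmlz w \<in> carrier_vec n"
proof -
  note p = cscalar_self_pos[OF w]
  define r where "r = Re (w \<bullet>c w)"
  have ww: "w \<bullet>c w = complex_of_real r" using p by (simp add: r_def complex_eq_iff)
  have r: "r > 0" using p r_def by auto
  have "nrmlz w \<bullet>c nrmlz w = complex_of_real (1/sqrt r) * cnj (complex_of_real (1/sqrt r)) * (w \<bullet>c w)"
    unfolding nrmlz_def r_def by (rule cscalar_smult[OF w(1) w(1)])
  also have "\<dots> = complex_of_real (1 / sqrt r * (1 / sqrt r) * r)" 
    unfolding ww by (simp only: complex_cnj_complex_of_real of_real_mult)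
  also have "1 / sqrt r * (1 / sqrt r) * r = 1" using r
    by (simp add: field_simps)
  finally show "nrmlz w \<bullet>c nrmlz w = 1" by simp
  show "nrmlz w \<in> carrier_vec n" using w unfolding nrmlz_def by simp
qed

lemma nrmlz_id: "w \<bullet>c w = 1 \<Longrightarrow> nrmlz w = w"
  unfolding nrmlz_def by simp


lemma orthonormal_basis_hd:
  fixes v :: "complex vec"
  assumes v: "v \<in> carrier_vec n" and v1: "v \<bullet>c v = 1"
  shows "\<exists>ws. length ws = n \<and> set ws \<subseteq> carrier_vec n \<and> hd ws = v \<and>
     (\<forall>i<n. \<forall>j<n. ws!i \<bullet>c ws!j = (if i = j then 1 else 0))"
proof -
  interpret cof_vec_space n "TYPE(complex)" .
  have v0: "v \<noteq> 0\<^sub>v n" using v1 v by auto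
  define b where "b = basis_completion v"
  from basis_completion[OF v v0, folded b_def]
  have dist_b: "distinct b" 
    and indep: "\<not> lin_dep (set b)" and b: "set b \<subseteq> carrier_vec n" and hdb: "hd b = v" 
    and len_b: "length b = n" by auto
  have n: "n \<noteq> 0"
  proof
    assume "n = 0"
    hence "v = 0\<^sub>v n" using v by (intro eq_vecI) auto
    with v0 show False by simp
  qed
  from hdb len_b n obtain vs where bv: "b = v # vs" by (cases b, auto)
  define ws0 where "ws0 = gram_schmidt n b"
  from gram_schmidt_result[OF b dist_b indep refl, folded ws0_def]
  have ws0: "set ws0 \<subseteq> carrier_vec n" "corthogonal ws0" "length ws0 = n" 
    by (auto simp: len_b)
  from gram_schmidt_hd[OF v, of vs, folded bv] have hdws0: "hd ws0 = v" unfolding ws0_def .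
  have ws0i: "ws0 ! i \<in> carrier_vec n" "ws0 ! i \<noteq> 0\<^sub>v n" if "i < n" for i
  proof -
    show c: "ws0 ! i \<in> carrier_vec n" using ws0 that by auto
    have "ws0 ! i \<bullet>c ws0 ! i \<noteq> 0" using corthogonalD[OF ws0(2), of i i] ws0(3) that by auto
    thus "ws0 ! i \<noteq> 0\<^sub>v n" using c by auto
  qed
  define ws where "ws = map nrmlz ws0"
  have len: "length ws = n" using ws0 ws_def by auto
  have carr: "set ws \<subseteq> carrier_vec n"
  proof
    fix w assume "w \<in> set ws"
    then obtain i where i: "i < n" and w: "w = ws ! i" using len by (auto simp: in_set_conv_nth)
    show "w \<in> carrier_vec n" using nrmlz(2)[OF ws0i[OF i]] w i ws0(3) unfolding ws_def by simp
  qed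
  have hd: "hd ws = v" unfolding ws_def using hdws0 ws0(3) n
    by (cases ws0, auto simp: nrmlz_id[OF v1])
  have on: "ws!i \<bullet>c ws!j = (if i = j then 1 else 0)" if i: "i < n" and j: "j < n" for i j
  proof (cases "i = j")
    case True
    thus ?thesis using nrmlz(1)[OF ws0i[OF i]] i ws0(3) unfolding ws_def by simp
  next
    case False
    have "ws0 ! i \<bullet>c ws0 ! j = 0" using corthogonalD[OF ws0(2), of i j] ws0(3) i j False by auto
    thus ?thesis using False i j ws0(3) cscalar_smult[OF ws0i(1)[OF i] ws0i(1)[OF j]]
      unfolding ws_def nrmlz_def by simp
  qed
  show ?thesis using len carr hd on by blast
qed

definition unitary :: "nat \<Rightarrow> complex mat \<Rightarrow> bool" where
  "unitary n U \<longleftrightarrow> U \<in> carrier_mat n n \<and> adj U * U = 1\<^sub>m n \<and> U * adj U = 1\<^sub>m n"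

lemma unitary_of_cols:
  fixes ws :: "complex vec list"
  assumes len: "length ws = n" and carr: "set ws \<subseteq> carrier_vec n"
    and on: "\<forall>i<n. \<forall>j<n. ws!i \<bullet>c ws!j = (if i = j then 1 else 0)"
  shows "unitary n (mat_of_cols n ws)"
proof -
  define W where "W = mat_of_cols n ws"
  have W: "W \<in> carrier_mat n n" unfolding W_def using len by auto
  have wsi: "ws ! i \<in> carrier_vec n" if "i < n" for i using carr len that by auto
  have "adj W * W = 1\<^sub>m n"
  proof (rule eq_matI)
    fix i j assume i: "i < dim_row (1\<^sub>m n)" and j: "j < dim_col (1\<^sub>m n)"
    hence i: "i < n" and j: "j < n" by auto
    have "(adj W * W) $$ (i,j) = (\<Sum>k<n. cnj (ws ! i $ k) * ws ! j $ k)"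
      using W i j len by (simp add: scalar_prod_def W_def lessThan_atLeast0 mat_of_cols_index)
    also have "\<dots> = ws ! j \<bullet>c ws ! i"
      using wsi[OF i] wsi[OF j] by (simp add: scalar_prod_def lessThan_atLeast0 mult.commute)
    also have "\<dots> = 1\<^sub>m n $$ (i,j)" using on i j by auto
    finally show "(adj W * W) $$ (i,j) = 1\<^sub>m n $$ (i,j)" .
  qed (use W in auto)
  moreover hence "W * adj W = 1\<^sub>m n" using mat_mult_left_right_inverse[OF adj_carrier[OF W] W] by auto
  ultimately show ?thesis using W unfolding unitary_def W_def by auto
qed


lemma unitary_mult: assumes "unitary n U" "unitary n V" shows "unitary n (U * V)"
proof -
  have U: "U \<in> carrier_mat n n" and V: "V \<in> carrier_mat n n" using assms unfolding unitary_def by auto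
  have aU: "adj U \<in> carrier_mat n n" and aV: "adj V \<in> carrier_mat n n" using U V by auto
  have as: "\<And>X Y Z. X \<in> carrier_mat n n \<Longrightarrow> Y \<in> carrier_mat n n \<Longrightarrow> Z \<in> carrier_mat n n \<Longrightarrow> X * Y * Z = X * (Y * Z)"
    by (rule assoc_mult_mat)
  have mc: "\<And>X Y. X \<in> carrier_mat n n \<Longrightarrow> Y \<in> carrier_mat n n \<Longrightarrow> X * Y \<in> carrier_mat n n"
    by (rule mult_carrier_mat)
  have "adj (U * V) * (U * V) = adj V * ((adj U * U) * V)"
    using U V aU aV by (simp add: adj_mult[OF U V] as mc)
  also have "\<dots> = 1\<^sub>m n" using assms V aV unfolding unitary_def by simp
  finally have 1: "adj (U * V) * (U * V) = 1\<^sub>m n" .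
  have "(U * V) * adj (U * V) = U * ((V * adj V) * adj U)"
    using U V aU aV by (simp add: adj_mult[OF U V] as mc)
  also have "\<dots> = 1\<^sub>m n" using assms U aU unfolding unitary_def by simp
  finally show ?thesis using 1 U V unfolding unitary_def by auto
qed

lemma unitary_one: "unitary n (1\<^sub>m n)" unfolding unitary_def by simp

lemma corthogonal_inv_adj:
  fixes ws :: "complex vec list"
  assumes len: "length ws = n" and carr: "set ws \<subseteq> carrier_vec n"
    and on: "\<forall>i<n. \<forall>j<n. ws!i \<bullet>c ws!j = (if i = j then 1 else 0)"
  shows "corthogonal_inv (mat_of_cols n ws) = adj (mat_of_cols n ws)"
proof -
  have "map vec_inv ws = map conjugate ws"
  proof (rule map_cong[OF refl])
    fix w assume "w \<in> set ws"
    then obtain i where i: "i < n" and w: "w = ws ! i" using len by (auto simp: in_set_conv_nth)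
    have "w \<bullet>c w = 1" using on i w by auto
    thus "vec_inv w = conjugate w" unfolding vec_inv_def by simp
  qed
  hence "mat_of_rows n (map vec_inv ws) = mat_of_rows n (map conjugate ws)" by (rule arg_cong)
  thus ?thesis unfolding corthogonal_inv_def mat_adjoint_def cols_mat_of_cols[OF carr] by simp
qed

lemma spectral:
  fixes A :: "complex mat"
  assumes "A \<in> carrier_mat n n" "adj A = A"
  shows "\<exists>U D. unitary n U \<and> D \<in> carrier_mat n n \<and> diagonal_mat D \<and> A = U * D * adj U"
  using assms
proof (induction n arbitrary: A)
  case 0
  hence A: "A \<in> carrier_mat 0 0" by auto
  have "A = 1\<^sub>m 0 * A * adj (1\<^sub>m 0)" using A by simp
  moreover have "diagonal_mat A" using A unfolding diagonal_mat_def by auto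
  ultimately show ?case using unitary_one A by blast
next
  case (Suc m A)
  define n where "n = Suc m"
  have A: "A \<in> carrier_mat n n" and h: "adj A = A" using Suc n_def by auto
  have n0: "n > 0" "n \<noteq> 0" unfolding n_def by auto
  obtain e where "eigenvalue A e" using spectrum_non_empty[OF A n0(1)] unfolding spectrum_def by auto
  then obtain v0 where ev: "eigenvector A v0 e" unfolding eigenvalue_def by auto
  have v0: "v0 \<in> carrier_vec n" "v0 \<noteq> 0\<^sub>v n" and Av0: "A *\<^sub>v v0 = e \<cdot>\<^sub>v v0"
    using ev A unfolding eigenvector_def by auto
  define v where "v = nrmlz v0"
  have v: "v \<in> carrier_vec n" and v1: "v \<bullet>c v = 1" using nrmlz[OF v0] v_def by auto
  have vne: "v \<noteq> 0\<^sub>v n" using v1 v by auto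
  have Av: "A *\<^sub>v v = e \<cdot>\<^sub>v v"
    unfolding v_def nrmlz_def mult_mat_vec[OF A v0(1)] Av0 smult_smult_assoc by (simp add: mult.commute)
  obtain ws where len: "length ws = n" and carr: "set ws \<subseteq> carrier_vec n" and hd: "hd ws = v"
    and on: "\<forall>i<n. \<forall>j<n. ws!i \<bullet>c ws!j = (if i = j then 1 else 0)"
    using orthonormal_basis_hd[OF v v1] by blast
  define W where "W = mat_of_cols n ws"
  have as: "\<And>X Y Z. X \<in> carrier_mat n n \<Longrightarrow> Y \<in> carrier_mat n n \<Longrightarrow> Z \<in> carrier_mat n n \<Longrightarrow> X * Y * Z = X * (Y * Z)"
    by (rule assoc_mult_mat)
  have mc: "\<And>X Y. X \<in> carrier_mat n n \<Longrightarrow> Y \<in> carrier_mat n n \<Longrightarrow> X * Y \<in> carrier_mat n n"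
    by (rule mult_carrier_mat)
  have uW: "unitary n W" unfolding W_def by (rule unitary_of_cols[OF len carr on])
  have W: "W \<in> carrier_mat n n" and aW: "adj W \<in> carrier_mat n n" using uW unfolding unitary_def by auto
  have corth: "corthogonal ws"
    by (intro corthogonalI, insert on len, auto)
  define A' where "A' = adj W * A * W"
  have A': "A' \<in> carrier_mat n n" unfolding A'_def using W aW A by auto
  have col0: "col A' 0 = vec n (\<lambda> i. if i = 0 then e else 0)"
    using corthogonal_col_ev_0[OF A v vne Av n0(2) hd carr corth len]
    unfolding corthogonal_inv_adj[OF len carr on] A'_def W_def .
  have hA': "adj A' = A'"
  proof -
    have "adj A' = adj W * (adj A * adj (adj W))" unfolding A'_def
      using adj_mult[OF mult_carrier_mat[OF aW A] W] adj_mult[OF aW A] by simp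
    also have "\<dots> = A'" unfolding A'_def h adj_adj using aW A W by (simp add: as mc)
    finally show ?thesis .
  qed
  have Ai0: "A' $$ (i,0) = (if i = 0 then e else 0)" if "i < n" for i
    using arg_cong[OF col0, of "\<lambda>x. x $ i"] that A' n0 by auto
  have ereal: "cnj e = e"
  proof -
    have "A' $$ (0,0) = adj A' $$ (0,0)" using hA' by simp
    also have "\<dots> = cnj (A' $$ (0,0))" using A' n0 by simp
    finally show ?thesis using Ai0[of 0] n0 by simp
  qed
  have A0j: "A' $$ (0,j) = (if j = 0 then e else 0)" if j: "j < n" for j
  proof -
    have "A' $$ (0,j) = adj A' $$ (0,j)" using hA' by simp
    also have "\<dots> = cnj (A' $$ (j,0))" using A' j n0 by simp
    also have "\<dots> = (if j = 0 then cnj e else 0)" using Ai0[OF j] by simp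
    finally show ?thesis using ereal by simp
  qed
  define A3 where "A3 = mat m m (\<lambda>(i,j). A' $$ (Suc i, Suc j))"
  have A3: "A3 \<in> carrier_mat m m" unfolding A3_def by auto
  have hA3: "adj A3 = A3"
  proof (rule eq_matI)
    fix i j assume "i < dim_row A3" "j < dim_col A3"
    hence i: "i < m" and j: "j < m" using A3 by auto
    have "adj A3 $$ (i,j) = cnj (A' $$ (Suc j, Suc i))" using i j unfolding A3_def by simp
    also have "\<dots> = adj A' $$ (Suc i, Suc j)" using i j A' unfolding n_def by simp
    also have "\<dots> = A3 $$ (i,j)" using i j unfolding hA' A3_def by simp
    finally show "adj A3 $$ (i,j) = A3 $$ (i,j)" .
  qed (use A3 in auto)
  obtain U3 D3 where uU3: "unitary m U3" and D3: "D3 \<in> carrier_mat m m" and dD3: "diagonal_mat D3"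
    and A3eq: "A3 = U3 * D3 * adj U3"
    using Suc.IH[OF A3 hA3] by blast
  have U3: "U3 \<in> carrier_mat m m" and aU3: "adj U3 \<in> carrier_mat m m" using uU3 unfolding unitary_def by auto
  define E where "E = mat 1 1 (\<lambda>_. e)"
  have E: "E \<in> carrier_mat 1 1" unfolding E_def by auto
  define B where "B = four_block_mat (1\<^sub>m 1) (0\<^sub>m 1 m) (0\<^sub>m m 1) U3"
  define D where "D = four_block_mat E (0\<^sub>m 1 m) (0\<^sub>m m 1) D3"
  have nm: "n = 1 + m" unfolding n_def by simp
  have B: "B \<in> carrier_mat n n" unfolding B_def nm 
    by (rule four_block_carrier_mat[OF one_carrier_mat U3])
  have D: "D \<in> carrier_mat n n" unfolding D_def nm
    by (rule four_block_carrier_mat[OF E D3])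
  have A'eq: "A' = four_block_mat E (0\<^sub>m 1 m) (0\<^sub>m m 1) A3"
  proof (rule eq_matI)
    fix i j assume "i < dim_row (four_block_mat E (0\<^sub>m 1 m) (0\<^sub>m m 1) A3)"
      "j < dim_col (four_block_mat E (0\<^sub>m 1 m) (0\<^sub>m m 1) A3)"
    hence i: "i < n" and j: "j < n" using E A3 unfolding n_def by auto
    show "A' $$ (i,j) = four_block_mat E (0\<^sub>m 1 m) (0\<^sub>m m 1) A3 $$ (i,j)"
    proof (cases "i = 0 \<or> j = 0")
      case True
      thus ?thesis using Ai0[OF i] A0j[OF j] i j E A3 unfolding E_def n_def by auto
    next
      case False
      then obtain i' j' where "i = Suc i'" "j = Suc j'" by (cases i; cases j; auto)
      thus ?thesis using i j E A3 unfolding A3_def n_def by simp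
    qed
  qed (use A' E A3 n_def in auto)
  have aB: "adj B = four_block_mat (1\<^sub>m 1) (0\<^sub>m 1 m) (0\<^sub>m m 1) (adj U3)"
    by (rule eq_matI, insert U3 aU3, auto simp: B_def)
  have uB: "unitary n B"
  proof -
    have "adj B * B = four_block_mat (1\<^sub>m 1) (0\<^sub>m 1 m) (0\<^sub>m m 1) (adj U3) * four_block_mat (1\<^sub>m 1) (0\<^sub>m 1 m) (0\<^sub>m m 1) U3"
      using aB unfolding B_def by simp
    also have "\<dots> = four_block_mat (1\<^sub>m 1) (0\<^sub>m 1 m) (0\<^sub>m m 1) (adj U3 * U3)"
      by (subst mult_four_block_mat[OF one_carrier_mat zero_carrier_mat zero_carrier_mat aU3
           one_carrier_mat zero_carrier_mat zero_carrier_mat U3], insert U3 aU3, 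
          simp add: left_add_zero_mat[OF mult_carrier_mat[OF aU3 U3]])
    also have "\<dots> = 1\<^sub>m n" using uU3 unfolding unitary_def n_def by simp
    finally have 1: "adj B * B = 1\<^sub>m n" .

    have "B * adj B = four_block_mat (1\<^sub>m 1) (0\<^sub>m 1 m) (0\<^sub>m m 1) U3 * four_block_mat (1\<^sub>m 1) (0\<^sub>m 1 m) (0\<^sub>m m 1) (adj U3)"
      using aB unfolding B_def by simp
    also have "\<dots> = four_block_mat (1\<^sub>m 1) (0\<^sub>m 1 m) (0\<^sub>m m 1) (U3 * adj U3)"
      by (subst mult_four_block_mat[OF one_carrier_mat zero_carrier_mat zero_carrier_mat U3
           one_carrier_mat zero_carrier_mat zero_carrier_mat aU3], insert U3 aU3, 
          simp add: left_add_zero_mat[OF mult_carrier_mat[OF U3 aU3]])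
    also have "\<dots> = 1\<^sub>m n" using uU3 unfolding unitary_def n_def by simp
    finally show ?thesis using 1 B unfolding unitary_def by simp
  qed
  have BDB: "B * D * adj B = A'"
  proof -
    have "B * D = four_block_mat E (0\<^sub>m 1 m) (0\<^sub>m m 1) (U3 * D3)"
      unfolding D_def B_def
      by (subst mult_four_block_mat[OF one_carrier_mat zero_carrier_mat zero_carrier_mat U3
           E zero_carrier_mat zero_carrier_mat D3], insert U3 D3 E, simp)
    hence "B * D * adj B = four_block_mat E (0\<^sub>m 1 m) (0\<^sub>m m 1) (U3 * D3) * 
       four_block_mat (1\<^sub>m 1) (0\<^sub>m 1 m) (0\<^sub>m m 1) (adj U3)" unfolding aB by simp
    also have "\<dots> = four_block_mat E (0\<^sub>m 1 m) (0\<^sub>m m 1) (U3 * D3 * adj U3)"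
      by (subst mult_four_block_mat[OF E zero_carrier_mat zero_carrier_mat mult_carrier_mat[OF U3 D3]
           one_carrier_mat zero_carrier_mat zero_carrier_mat aU3], insert U3 D3 E aU3, 
         simp add: left_add_zero_mat[OF mult_carrier_mat[OF mult_carrier_mat[OF U3 D3] aU3]])
    also have "\<dots> = A'" unfolding A'eq A3eq ..
    finally show ?thesis .
  qed
  define U where "U = W * B"
  have uU: "unitary n U" unfolding U_def by (rule unitary_mult[OF uW uB])
  have dD: "diagonal_mat D" 
    using dD3 D3 E unfolding diagonal_mat_def D_def E_def by auto
  have aB': "adj B \<in> carrier_mat n n" using B by simp
  have "U * D * adj U = W * (B * D * adj B) * adj W"
    unfolding U_def adj_mult[OF W B] using W B D aW aB'
    by (simp add: as mc)
  also have "\<dots> = (W * adj W) * A * (W * adj W)" unfolding BDB A'_def using W aW A by (simp add: as mc)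
  also have "\<dots> = A" using uW A unfolding unitary_def by simp
  finally show ?case using uU D dD unfolding n_def by metis
qed


lemma eig_col:
  assumes uU: "unitary n U" and D: "D \<in> carrier_mat n n" and dD: "diagonal_mat D"
    and AU: "A = U * D * adj U" and i: "i < n"
  shows "A *\<^sub>v col U i = D $$ (i,i) \<cdot>\<^sub>v col U i" "col U i \<bullet>c col U i = 1" 
    "col U i \<in> carrier_vec n"
proof -
  have U: "U \<in> carrier_mat n n" and aU: "adj U \<in> carrier_mat n n" using uU unfolding unitary_def by auto
  have as: "\<And>X Y Z. X \<in> carrier_mat n n \<Longrightarrow> Y \<in> carrier_mat n n \<Longrightarrow> Z \<in> carrier_mat n n \<Longrightarrow> X * Y * Z = X * (Y * Z)"
    by (rule assoc_mult_mat)
  have mc: "\<And>X Y. X \<in> carrier_mat n n \<Longrightarrow> Y \<in> carrier_mat n n \<Longrightarrow> X * Y \<in> carrier_mat n n"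
    by (rule mult_carrier_mat)
  have "A * U = U * D * (adj U * U)" unfolding AU using U D aU by (simp add: as mc)
  also have "\<dots> = U * D" using uU U D unfolding unitary_def by simp
  finally have AU2: "A * U = U * D" .
  have A: "A \<in> carrier_mat n n" unfolding AU using U D aU by (simp add: as mc)
  have "A *\<^sub>v col U i = col (A * U) i" using col_mult2[OF A U i] by simp
  also have "\<dots> = U *\<^sub>v col D i" unfolding AU2 by (rule col_mult2[OF U D i])
  also have "col D i = D $$ (i,i) \<cdot>\<^sub>v unit_vec n i"
    by (rule eq_vecI, insert D dD i, auto simp: diagonal_mat_def)
  also have "U *\<^sub>v (D $$ (i,i) \<cdot>\<^sub>v unit_vec n i) = D $$ (i,i) \<cdot>\<^sub>v (U *\<^sub>v unit_vec n i)"
    by (rule mult_mat_vec[OF U], simp)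
  also have "U *\<^sub>v unit_vec n i = col U i"
    by (rule eq_vecI, insert U i, auto)
  finally show "A *\<^sub>v col U i = D $$ (i,i) \<cdot>\<^sub>v col U i" .
  have "(adj U * U) $$ (i,i) = 1" using uU i unfolding unitary_def by simp
  moreover have "(adj U * U) $$ (i,i) = col U i \<bullet>c col U i"
    using U aU i by (simp add: scalar_prod_def mult.commute)
  ultimately show "col U i \<bullet>c col U i = 1" by simp
  show "col U i \<in> carrier_vec n" by (rule carrier_vecI, insert U, simp)
qed

lemma herm_diag_real:
  assumes uU: "unitary n U" and D: "D \<in> carrier_mat n n" and AU: "A = U * D * adj U"
    and h: "adj A = A" and i: "i < n"
  shows "cnj (D $$ (i,i)) = D $$ (i,i)"
proof -
  have U: "U \<in> carrier_mat n n" and aU: "adj U \<in> carrier_mat n n" using uU unfolding unitary_def by auto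
  have as: "\<And>X Y Z. X \<in> carrier_mat n n \<Longrightarrow> Y \<in> carrier_mat n n \<Longrightarrow> Z \<in> carrier_mat n n \<Longrightarrow> X * Y * Z = X * (Y * Z)"
    by (rule assoc_mult_mat)
  have mc: "\<And>X Y. X \<in> carrier_mat n n \<Longrightarrow> Y \<in> carrier_mat n n \<Longrightarrow> X * Y \<in> carrier_mat n n"
    by (rule mult_carrier_mat)
  have "adj U * A * U = (adj U * U) * D * (adj U * U)" unfolding AU using U D aU by (simp add: as mc)
  also have "\<dots> = D" using uU D unfolding unitary_def by simp
  finally have DA: "D = adj U * A * U" by simp
  have A: "A \<in> carrier_mat n n" unfolding AU using U D aU by (simp add: as mc)
  have "adj D = adj U * adj A * adj (adj U)" unfolding DA
    using adj_mult[OF mult_carrier_mat[OF aU A] U] adj_mult[OF aU A] aU A U by (simp add: as mc)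
  also have "\<dots> = D" unfolding h adj_adj DA ..
  finally have "adj D = D" .
  hence "D $$ (i,i) = adj D $$ (i,i)" by simp
  also have "\<dots> = cnj (D $$ (i,i))" using D i by simp
  finally show ?thesis by simp
qed


lemma cscalar_smult_left: fixes v w :: "complex vec"
  assumes "v \<in> carrier_vec n" "w \<in> carrier_vec n"
  shows "(a \<cdot>\<^sub>v v) \<bullet>c w = a * (v \<bullet>c w)"
  using assms by (simp add: scalar_prod_def sum_distrib_left mult_ac)

lemma cscalar_smult_right: fixes v w :: "complex vec"
  assumes "v \<in> carrier_vec n" "w \<in> carrier_vec n"
  shows "v \<bullet>c (b \<cdot>\<^sub>v w) = cnj b * (v \<bullet>c w)"
  using assms by (simp add: scalar_prod_def sum_distrib_left mult_ac)

lemma diag_quad_form: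
  fixes y :: "complex vec" and s :: "nat \<Rightarrow> real"
  assumes y: "y \<in> carrier_vec n" "y \<noteq> 0\<^sub>v n" and s: "\<And>i. i < n \<Longrightarrow> s i > 0"
  shows "0 < Re ((mat n n (\<lambda>(i,j). if i = j then complex_of_real (s i) else 0) *\<^sub>v y) \<bullet>c y)"
proof -
  let ?S = "mat n n (\<lambda>(i,j). if i = j then complex_of_real (s i) else 0)"
  have Sy: "(?S *\<^sub>v y) $ i = complex_of_real (s i) * y $ i" if i: "i < n" for i
  proof -
    have "(?S *\<^sub>v y) $ i = (\<Sum>k\<in>{0..<n}. (if i = k then complex_of_real (s i) else 0) * y $ k)"
      using i y by (simp add: scalar_prod_def row_def)
    also have "\<dots> = (\<Sum>k\<in>{0..<n}. if k = i then complex_of_real (s i) * y $ i else 0)"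
      by (rule sum.cong, auto)
    also have "\<dots> = complex_of_real (s i) * y $ i" using i by simp
    finally show ?thesis .
  qed
  have "(?S *\<^sub>v y) \<bullet>c y = (\<Sum>i\<in>{0..<n}. complex_of_real (s i) * (y $ i * cnj (y $ i)))"
    using y Sy by (simp add: scalar_prod_def mult.assoc)
  also have "\<dots> = (\<Sum>i\<in>{0..<n}. complex_of_real (s i * (cmod (y $ i))\<^sup>2))"
    by (rule sum.cong, simp_all add: complex_norm_square[symmetric])
  finally have eq: "Re ((?S *\<^sub>v y) \<bullet>c y) = (\<Sum>i\<in>{0..<n}. s i * (cmod (y $ i))\<^sup>2)"
    by simp
  obtain k where k: "k < n" "y $ k \<noteq> 0"
  proof (rule ccontr)
    assume "\<not> thesis"
    hence "\<forall>k<n. y $ k = 0" using that by blast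
    hence "y = 0\<^sub>v n" using y by (intro eq_vecI) auto
    with y show False by simp
  qed
  have nn: "\<forall>i\<in>{0..<n}. 0 \<le> s i * (cmod (y $ i))\<^sup>2"
  proof
    fix i assume "i \<in> {0..<n}"
    hence "s i > 0" using s by simp
    thus "0 \<le> s i * (cmod (y $ i))\<^sup>2" by simp
  qed
  have "0 < s k * (cmod (y $ k))\<^sup>2" using s[OF k(1)] k(2) by simp
  hence "0 < (\<Sum>i\<in>{0..<n}. s i * (cmod (y $ i))\<^sup>2)"
    using sum_pos2[of "{0..<n}" k "\<lambda>i. s i * (cmod (y $ i))\<^sup>2"] k nn by simp
  thus ?thesis unfolding eq .
qed

lemma hpd_sqrt_exists:
  assumes hS: "hpd n S" shows "\<exists>R. hpd n R \<and> R * R = S"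
proof -
  have S: "S \<in> carrier_mat n n" and h: "adj S = S" and pos: "\<And>x. x \<in> carrier_vec n \<Longrightarrow> x \<noteq> 0\<^sub>v n \<Longrightarrow> 0 < Re ((S *\<^sub>v x) \<bullet>c x)"
    using hS unfolding hpd_def by auto
  obtain U D where uU: "unitary n U" and D: "D \<in> carrier_mat n n" and dD: "diagonal_mat D" and SU: "S = U * D * adj U"
    using spectral[OF S h] by blast
  have U: "U \<in> carrier_mat n n" and aU: "adj U \<in> carrier_mat n n" using uU unfolding unitary_def by auto
  have as: "\<And>X Y Z. X \<in> carrier_mat n n \<Longrightarrow> Y \<in> carrier_mat n n \<Longrightarrow> Z \<in> carrier_mat n n \<Longrightarrow> X * Y * Z = X * (Y * Z)"
    by (rule assoc_mult_mat)
  have mc: "\<And>X Y. X \<in> carrier_mat n n \<Longrightarrow> Y \<in> carrier_mat n n \<Longrightarrow> X * Y \<in> carrier_mat n n"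
    by (rule mult_carrier_mat)
  have dreal: "complex_of_real (Re (D $$ (i,i))) = D $$ (i,i)" if i: "i < n" for i
    using herm_diag_real[OF uU D SU h i] by (simp add: complex_eq_iff)
  have dpos: "Re (D $$ (i,i)) > 0" if i: "i < n" for i
  proof -
    note ec = eig_col[OF uU D dD SU i]
    have "col U i \<noteq> 0\<^sub>v n" using ec(2,3) by auto
    hence "0 < Re ((S *\<^sub>v col U i) \<bullet>c col U i)" using pos ec(3) by auto
    also have "(S *\<^sub>v col U i) \<bullet>c col U i = D $$ (i,i)" unfolding ec(1)
      using cscalar_smult_left[OF ec(3) ec(3)] ec(2) by simp
    finally show ?thesis .
  qed
  define s where "s i = sqrt (Re (D $$ (i,i)))" for i
  define Sq where "Sq = mat n n (\<lambda>(i,j). if i = j then complex_of_real (s i) else 0)"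
  have Sq: "Sq \<in> carrier_mat n n" unfolding Sq_def by simp
  have spos: "s i > 0" if "i < n" for i using dpos[OF that] unfolding s_def by simp
  have SqSq: "Sq * Sq = D"
  proof (rule eq_matI)
    fix i j assume "i < dim_row D" "j < dim_col D"
    hence i: "i < n" and j: "j < n" using D by auto
    have "(Sq * Sq) $$ (i,j) = (\<Sum>k\<in>{0..<n}. (if i = k then complex_of_real (s i) else 0) * (if k = j then complex_of_real (s k) else 0))"
      using i j unfolding Sq_def by (simp add: scalar_prod_def)
    also have "\<dots> = (\<Sum>k\<in>{0..<n}. if k = i then (if i = j then complex_of_real (s i * s i) else 0) else 0)"
      by (rule sum.cong, auto)
    also have "\<dots> = (if i = j then complex_of_real (s i * s i) else 0)" using i by simp
    also have "\<dots> = D $$ (i,j)"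
    proof (cases "i = j")
      case True
      have "s i * s i = Re (D $$ (i,i))" unfolding s_def real_sqrt_mult_self using dpos[OF i]
        by simp
      thus ?thesis using True dreal[OF i] by simp
    next
      case False
      thus ?thesis using dD i j D unfolding diagonal_mat_def by auto
    qed
    finally show "(Sq * Sq) $$ (i,j) = D $$ (i,j)" .
  qed (use Sq D in auto)
  have aSq: "adj Sq = Sq" by (rule eq_matI, auto simp: Sq_def)
  define R where "R = U * Sq * adj U"
  have R: "R \<in> carrier_mat n n" unfolding R_def using U Sq aU by (simp add: mc)
  have RR: "R * R = S"
  proof -
    have "R * R = U * Sq * (adj U * U) * Sq * adj U" unfolding R_def using U Sq aU by (simp add: as mc)
    also have "\<dots> = U * (Sq * Sq) * adj U" using uU U Sq aU unfolding unitary_def by (simp add: as mc)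
    finally show ?thesis unfolding SqSq SU .
  qed
  have hR: "adj R = R"
  proof -
    have "adj R = adj (adj U) * adj Sq * adj U" unfolding R_def
      using adj_mult[OF mult_carrier_mat[OF U Sq] aU] adj_mult[OF U Sq] U Sq aU by (simp add: as mc)
    thus ?thesis unfolding adj_adj aSq R_def .
  qed
  have pR: "0 < Re ((R *\<^sub>v x) \<bullet>c x)" if x: "x \<in> carrier_vec n" "x \<noteq> 0\<^sub>v n" for x
  proof -
    define y where "y = adj U *\<^sub>v x"
    have y: "y \<in> carrier_vec n" unfolding y_def using aU x by simp
    have "U *\<^sub>v y = (U * adj U) *\<^sub>v x" unfolding y_def using assoc_mult_mat_vec[OF U aU x(1)] by simp
    also have "\<dots> = x" using uU x unfolding unitary_def by simp
    finally have Uy: "U *\<^sub>v y = x" .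
    have y0: "y \<noteq> 0\<^sub>v n"
    proof
      assume "y = 0\<^sub>v n"
      hence "U *\<^sub>v y = 0\<^sub>v n" using U by (intro eq_vecI, auto simp: scalar_prod_def)
      with Uy x show False by simp
    qed
    have "(R *\<^sub>v x) \<bullet>c x = (U *\<^sub>v (Sq *\<^sub>v y)) \<bullet>c x"
      unfolding R_def y_def using assoc_mult_mat_vec[OF mult_carrier_mat[OF U Sq] aU x(1)]
        assoc_mult_mat_vec[OF U Sq mult_mat_vec_carrier[OF aU x(1)]] by simp
    also have "\<dots> = (Sq *\<^sub>v y) \<bullet>c y" unfolding y_def
      by (rule adj_inner[OF U _ x(1)], insert Sq aU x, simp)
    finally have "(R *\<^sub>v x) \<bullet>c x = (Sq *\<^sub>v y) \<bullet>c y" .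
    thus ?thesis using diag_quad_form[OF y y0 spos] unfolding Sq_def by simp
  qed
  show ?thesis using R hR pR RR unfolding hpd_def by blast
qed


lemma hpd_sqrt_unique:
  assumes h1: "hpd n R1" and h2: "hpd n R2" and eq: "R1 * R1 = R2 * R2"
  shows "R1 = R2"
proof -
  have R1: "R1 \<in> carrier_mat n n" and a1: "adj R1 = R1" and p1: "\<And>x. x \<in> carrier_vec n \<Longrightarrow> x \<noteq> 0\<^sub>v n \<Longrightarrow> 0 < Re ((R1 *\<^sub>v x) \<bullet>c x)"
    using h1 unfolding hpd_def by auto
  have R2: "R2 \<in> carrier_mat n n" and a2: "adj R2 = R2" and p2: "\<And>x. x \<in> carrier_vec n \<Longrightarrow> x \<noteq> 0\<^sub>v n \<Longrightarrow> 0 < Re ((R2 *\<^sub>v x) \<bullet>c x)"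
    using h2 unfolding hpd_def by auto
  define Dm where "Dm = R1 - R2"
  have Dm: "Dm \<in> carrier_mat n n" unfolding Dm_def using R2 by (rule minus_carrier_mat)
  have hD: "adj Dm = Dm" unfolding Dm_def adj_minus[OF R1 R2] a1 a2 ..
  obtain U L where uU: "unitary n U" and L: "L \<in> carrier_mat n n" and dL: "diagonal_mat L" and DU: "Dm = U * L * adj U"
    using spectral[OF Dm hD] by blast
  have U: "U \<in> carrier_mat n n" and aU: "adj U \<in> carrier_mat n n" using uU unfolding unitary_def by auto
  have L0: "L $$ (i,i) = 0" if i: "i < n" for i
  proof -
    note ec = eig_col[OF uU L dL DU i]
    define x where "x = col U i"
    define \<mu> where "\<mu> = L $$ (i,i)"
    have xc: "x \<in> carrier_vec n" and x1: "x \<bullet>c x = 1" and ex: "Dm *\<^sub>v x = \<mu> \<cdot>\<^sub>v x"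
      using ec unfolding x_def \<mu>_def by auto
    have mr: "cnj \<mu> = \<mu>" using herm_diag_real[OF uU L DU hD i] unfolding \<mu>_def .
    have x0: "x \<noteq> 0\<^sub>v n" using x1 xc by auto
    define a where "a = R1 *\<^sub>v x"
    define b where "b = R2 *\<^sub>v x"
    have ac: "a \<in> carrier_vec n" and bc: "b \<in> carrier_vec n" unfolding a_def b_def using R1 R2 xc by auto
    have e1: "Dm *\<^sub>v x = a - b" unfolding Dm_def a_def b_def by (rule minus_mult_distrib_mat_vec[OF R1 R2 xc])
    have e2: "Dm *\<^sub>v b = R1 *\<^sub>v b - R2 *\<^sub>v b" unfolding Dm_def by (rule minus_mult_distrib_mat_vec[OF R1 R2 bc])
    have e3: "R1 *\<^sub>v (Dm *\<^sub>v x) = R1 *\<^sub>v a - R1 *\<^sub>v b" unfolding e1 by (rule mult_minus_distrib_mat_vec[OF R1 ac bc])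
    have e4: "R1 *\<^sub>v a = R2 *\<^sub>v b" unfolding a_def b_def
      using assoc_mult_mat_vec[OF R1 R1 xc] assoc_mult_mat_vec[OF R2 R2 xc] eq by simp
    have R1b: "R1 *\<^sub>v b \<in> carrier_vec n" and R2b: "R2 *\<^sub>v b \<in> carrier_vec n" using R1 R2 bc by auto
    have cx: "conjugate x \<in> carrier_vec n" using xc by simp
    have sum0: "(R1 *\<^sub>v (Dm *\<^sub>v x)) \<bullet>c x + (Dm *\<^sub>v b) \<bullet>c x = 0"
      unfolding e3 e2 e4 minus_scalar_prod_distrib[OF R2b R1b cx] minus_scalar_prod_distrib[OF R1b R2b cx]
      by simp
    have t1: "(R1 *\<^sub>v (Dm *\<^sub>v x)) \<bullet>c x = \<mu> * (a \<bullet>c x)"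
    proof -
      have "(R1 *\<^sub>v (Dm *\<^sub>v x)) \<bullet>c x = (Dm *\<^sub>v x) \<bullet>c (adj R1 *\<^sub>v x)"
        by (rule adj_inner[OF R1 _ xc], insert Dm xc, simp)
      also have "\<dots> = \<mu> * (x \<bullet>c a)" unfolding ex a1 a_def[symmetric] by (rule cscalar_smult_left[OF xc ac])
      also have "x \<bullet>c a = a \<bullet>c x" unfolding a_def using adj_inner[OF R1 xc xc] a1 by simp
      finally show ?thesis .
    qed
    have t2: "(Dm *\<^sub>v b) \<bullet>c x = \<mu> * (b \<bullet>c x)"
    proof -
      have "(Dm *\<^sub>v b) \<bullet>c x = b \<bullet>c (adj Dm *\<^sub>v x)" by (rule adj_inner[OF Dm bc xc])
      also have "\<dots> = cnj \<mu> * (b \<bullet>c x)" unfolding hD ex by (rule cscalar_smult_right[OF bc xc])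
      finally show ?thesis unfolding mr .
    qed
    have "\<mu> * (a \<bullet>c x + b \<bullet>c x) = 0" using sum0 unfolding t1 t2 by (simp add: distrib_left)
    moreover have "Re (a \<bullet>c x + b \<bullet>c x) > 0" using p1[OF xc x0] p2[OF xc x0] unfolding a_def b_def by simp
    hence "a \<bullet>c x + b \<bullet>c x \<noteq> 0" by (metis zero_complex.sel(1) less_irrefl)
    ultimately show ?thesis unfolding \<mu>_def by simp
  qed
  have "L = 0\<^sub>m n n"
    by (rule eq_matI, insert L dL L0, auto simp: diagonal_mat_def)
  hence "Dm = 0\<^sub>m n n" unfolding DU using U aU by simp
  show "R1 = R2"
  proof (rule eq_matI)
    fix i j assume "i < dim_row R2" "j < dim_col R2"
    hence i: "i < n" and j: "j < n" using R2 by auto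
    have "R1 $$ (i,j) - R2 $$ (i,j) = Dm $$ (i,j)" unfolding Dm_def using R1 R2 i j by simp
    also have "\<dots> = 0" using \<open>Dm = 0\<^sub>m n n\<close> i j by simp
    finally show "R1 $$ (i,j) = R2 $$ (i,j)" by simp
  qed (use R1 R2 in auto)
qed

lemma hpd_sqrt:
  assumes "hpd n S" shows "hpd n (hpd_sqrt S)" "hpd_sqrt S * hpd_sqrt S = S"
proof -
  have dr: "dim_row S = n" using assms unfolding hpd_def by auto
  obtain R where R: "hpd n R" "R * R = S" using hpd_sqrt_exists[OF assms] by blast
  have "hpd_sqrt S = R" unfolding hpd_sqrt_def dr
    by (rule the_equality, use R hpd_sqrt_unique in auto)
  thus "hpd n (hpd_sqrt S)" "hpd_sqrt S * hpd_sqrt S = S" using R by auto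
qed


lemma cscalar_swap: fixes x y :: "complex vec"
  assumes "x \<in> carrier_vec n" "y \<in> carrier_vec n"
  shows "x \<bullet>c y = cnj (y \<bullet>c x)"
  using assms by (simp add: scalar_prod_def sum_conjugate mult.commute)

lemma re_herm_part:
  assumes M: "M \<in> carrier_mat n n" and v: "v \<in> carrier_vec n"
  shows "Re (((M + adj M) *\<^sub>v v) \<bullet>c v) = 2 * Re ((M *\<^sub>v v) \<bullet>c v)"
proof -
  have aM: "adj M \<in> carrier_mat n n" using M by simp
  have Mv: "M *\<^sub>v v \<in> carrier_vec n" and aMv: "adj M *\<^sub>v v \<in> carrier_vec n" 
    using mult_mat_vec_carrier[OF M v] mult_mat_vec_carrier[OF aM v] by auto
  have "((M + adj M) *\<^sub>v v) \<bullet>c v = (M *\<^sub>v v) \<bullet>c v + (adj M *\<^sub>v v) \<bullet>c v"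
    unfolding add_mult_distrib_mat_vec[OF M aM v]
    by (rule add_scalar_prod_distrib[OF Mv aMv], simp add: v)
  also have "(adj M *\<^sub>v v) \<bullet>c v = v \<bullet>c (M *\<^sub>v v)"
    using adj_inner[OF aM v v] by simp
  also have "\<dots> = cnj ((M *\<^sub>v v) \<bullet>c v)" by (rule cscalar_swap[OF v Mv])
  finally show ?thesis by simp
qed

lemma inj_inverse:
  fixes A :: "complex mat"
  assumes A: "A \<in> carrier_mat n n" and inj: "\<And>v. v \<in> carrier_vec n \<Longrightarrow> A *\<^sub>v v = 0\<^sub>v n \<Longrightarrow> v = 0\<^sub>v n"
  shows "\<exists>B. B \<in> carrier_mat n n \<and> A * B = 1\<^sub>m n \<and> B * A = 1\<^sub>m n"
proof -
  have "det A \<noteq> 0" using det_0_iff_vec_prod_zero[OF A] inj by auto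
  from det_non_zero_imp_unit[OF A this, of undefined]
  show ?thesis unfolding Units_def ring_mat_def by auto
qed

lemma minv_eq:
  assumes A: "A \<in> carrier_mat n n" and B: "B \<in> carrier_mat n n" and AB: "A * B = 1\<^sub>m n" and BA: "B * A = 1\<^sub>m n"
  shows "minv A = B"
proof -
  have dr: "dim_row A = n" using A by auto
  show ?thesis unfolding minv_def dr
  proof (rule the_equality)
    fix C assume C: "C \<in> carrier_mat n n \<and> A * C = 1\<^sub>m n \<and> C * A = 1\<^sub>m n"
    have Cc: "C \<in> carrier_mat n n" and CA: "C * A = 1\<^sub>m n" using C by auto
    have "C = C * (A * B)" using Cc AB by (simp add: right_mult_one_mat)
    also have "\<dots> = (C * A) * B" using assoc_mult_mat[OF Cc A B] by simp
    also have "\<dots> = B" using CA B by (simp add: left_mult_one_mat)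
    finally show "C = B" .
  qed (use B AB BA in auto)
qed

lemma quad_diff: fixes z y :: "complex vec"
  assumes z: "z \<in> carrier_vec n" and y: "y \<in> carrier_vec n"
  shows "Re ((z + y) \<bullet>c (z + y)) - Re ((z - y) \<bullet>c (z - y)) = 4 * Re (y \<bullet>c z)"
proof -
  have "(z + y) \<bullet>c (z + y) - (z - y) \<bullet>c (z - y) = 
    (\<Sum>i\<in>{0..<n}. (z $ i + y $ i) * cnj (z $ i + y $ i) - (z $ i - y $ i) * cnj (z $ i - y $ i))"
    using z y by (simp add: scalar_prod_def sum_subtractf)
  also have "\<dots> = (\<Sum>i\<in>{0..<n}. 2 * (y $ i * cnj (z $ i)) + 2 * (z $ i * cnj (y $ i)))"
    by (rule sum.cong, simp_all add: algebra_simps)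
  also have "\<dots> = 2 * (y \<bullet>c z) + 2 * (z \<bullet>c y)"
    using z y by (simp add: scalar_prod_def sum.distrib sum_distrib_left)
  finally have eq: "(z + y) \<bullet>c (z + y) - (z - y) \<bullet>c (z - y) = 2 * (y \<bullet>c z) + 2 * (z \<bullet>c y)" .
  have "Re (z \<bullet>c y) = Re (y \<bullet>c z)" using cscalar_swap[OF z y] by simp
  thus ?thesis using arg_cong[OF eq, of Re] by simp
qed

lemma mv_zero: "M \<in> carrier_mat n n \<Longrightarrow> M *\<^sub>v 0\<^sub>v n = (0\<^sub>v n :: complex vec)"
  by (intro eq_vecI, auto simp: scalar_prod_def)


lemma vc: "(M :: complex mat) \<in> carrier_mat n n \<Longrightarrow> w \<in> carrier_vec n \<Longrightarrow> M *\<^sub>v w \<in> carrier_vec n"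
  by (rule mult_mat_vec_carrier)

lemma lin_add: "(M :: complex mat) \<in> carrier_mat n n \<Longrightarrow> p \<in> carrier_vec n \<Longrightarrow> q \<in> carrier_vec n \<Longrightarrow> M *\<^sub>v (p + q) = M *\<^sub>v p + M *\<^sub>v q"
  by (rule mult_add_distrib_mat_vec)

lemma lin_minus: "(M :: complex mat) \<in> carrier_mat n n \<Longrightarrow> p \<in> carrier_vec n \<Longrightarrow> q \<in> carrier_vec n \<Longrightarrow> M *\<^sub>v (p - q) = M *\<^sub>v p - M *\<^sub>v q"
  by (rule mult_minus_distrib_mat_vec)

lemma lin_smult: "(M :: complex mat) \<in> carrier_mat n n \<Longrightarrow> p \<in> carrier_vec n \<Longrightarrow> M *\<^sub>v (c \<cdot>\<^sub>v p) = c \<cdot>\<^sub>v (M *\<^sub>v p)"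
  by (rule mult_mat_vec)

lemma lin_madd: "(M :: complex mat) \<in> carrier_mat n n \<Longrightarrow> N \<in> carrier_mat n n \<Longrightarrow> p \<in> carrier_vec n \<Longrightarrow> (M + N) *\<^sub>v p = M *\<^sub>v p + N *\<^sub>v p"
  by (rule add_mult_distrib_mat_vec)

lemma lin_mminus: "(M :: complex mat) \<in> carrier_mat n n \<Longrightarrow> N \<in> carrier_mat n n \<Longrightarrow> p \<in> carrier_vec n \<Longrightarrow> (M - N) *\<^sub>v p = M *\<^sub>v p - N *\<^sub>v p"
  by (rule minus_mult_distrib_mat_vec)

context
  fixes n :: nat and Sg T :: "complex mat"
  assumes Sg: "Sg \<in> carrier_mat n n" and T: "T \<in> carrier_mat n n"
    and ST: "\<And>w. w \<in> carrier_vec n \<Longrightarrow> Sg *\<^sub>v (T *\<^sub>v w) = w"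
    and TS: "\<And>w. w \<in> carrier_vec n \<Longrightarrow> T *\<^sub>v (Sg *\<^sub>v w) = w"
begin

lemma sym_lemma:
  assumes Y: "Y \<in> carrier_mat n n" and w: "w \<in> carrier_vec n"
  shows "(Sg - Y) *\<^sub>v (T *\<^sub>v ((Sg + Y) *\<^sub>v w)) = (Sg + Y) *\<^sub>v (T *\<^sub>v ((Sg - Y) *\<^sub>v w))"
proof -
  have c: "Sg *\<^sub>v w \<in> carrier_vec n" "Y *\<^sub>v w \<in> carrier_vec n" "T *\<^sub>v (Y *\<^sub>v w) \<in> carrier_vec n"
    "Y *\<^sub>v (T *\<^sub>v (Y *\<^sub>v w)) \<in> carrier_vec n"
    using Sg Y T w by (auto intro!: vc)
  have l: "(Sg - Y) *\<^sub>v (T *\<^sub>v ((Sg + Y) *\<^sub>v w)) = (Sg *\<^sub>v w + Y *\<^sub>v w) - (Y *\<^sub>v w + Y *\<^sub>v (T *\<^sub>v (Y *\<^sub>v w)))"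
    using c Sg Y T w by (simp add: lin_madd lin_mminus lin_add vc ST TS)
  have r: "(Sg + Y) *\<^sub>v (T *\<^sub>v ((Sg - Y) *\<^sub>v w)) = (Sg *\<^sub>v w + Y *\<^sub>v w) - (Y *\<^sub>v w + Y *\<^sub>v (T *\<^sub>v (Y *\<^sub>v w)))"
    using c Sg Y T w apply (simp add: lin_madd lin_mminus lin_minus vc ST TS)
    apply (rule eq_vecI)
    apply auto
    done
  show ?thesis unfolding l r ..
qed

lemma expand_pp:
  assumes X: "X \<in> carrier_mat n n" and Y: "Y \<in> carrier_mat n n" and v: "v \<in> carrier_vec n"
  shows "(Sg + Y) *\<^sub>v (T *\<^sub>v ((Sg + X) *\<^sub>v v)) = Sg *\<^sub>v v + Y *\<^sub>v (T *\<^sub>v (X *\<^sub>v v)) + (X *\<^sub>v v + Y *\<^sub>v v)"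
proof -
  have c: "Sg *\<^sub>v v \<in> carrier_vec n" "X *\<^sub>v v \<in> carrier_vec n" "Y *\<^sub>v v \<in> carrier_vec n" "T *\<^sub>v (X *\<^sub>v v) \<in> carrier_vec n"
    "Y *\<^sub>v (T *\<^sub>v (X *\<^sub>v v)) \<in> carrier_vec n" "Sg *\<^sub>v (T *\<^sub>v (X *\<^sub>v v)) \<in> carrier_vec n"
    using Sg X Y T v by (auto intro!: vc)
  have l: "(Sg + Y) *\<^sub>v (T *\<^sub>v ((Sg + X) *\<^sub>v v)) = (Sg *\<^sub>v v + Y *\<^sub>v v) + (X *\<^sub>v v + Y *\<^sub>v (T *\<^sub>v (X *\<^sub>v v)))"
    using c Sg X Y T v apply (simp add: lin_madd lin_add vc ST TS)
    apply (rule eq_vecI)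
    apply auto
    done
  show ?thesis unfolding l by (rule eq_vecI, insert c v Sg X Y, auto)
qed

lemma expand_mm:
  assumes X: "X \<in> carrier_mat n n" and Y: "Y \<in> carrier_mat n n" and v: "v \<in> carrier_vec n"
  shows "(Sg - Y) *\<^sub>v (T *\<^sub>v ((Sg - X) *\<^sub>v v)) = Sg *\<^sub>v v + Y *\<^sub>v (T *\<^sub>v (X *\<^sub>v v)) - (X *\<^sub>v v + Y *\<^sub>v v)"
proof -
  have c: "Sg *\<^sub>v v \<in> carrier_vec n" "X *\<^sub>v v \<in> carrier_vec n" "Y *\<^sub>v v \<in> carrier_vec n" "T *\<^sub>v (X *\<^sub>v v) \<in> carrier_vec n"
    "Y *\<^sub>v (T *\<^sub>v (X *\<^sub>v v)) \<in> carrier_vec n" "Sg *\<^sub>v (T *\<^sub>v (X *\<^sub>v v)) \<in> carrier_vec n"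
    using Sg X Y T v by (auto intro!: vc)
  have l: "(Sg - Y) *\<^sub>v (T *\<^sub>v ((Sg - X) *\<^sub>v v)) = (Sg *\<^sub>v v - X *\<^sub>v v) - (Y *\<^sub>v v - Y *\<^sub>v (T *\<^sub>v (X *\<^sub>v v)))"
    using c Sg X Y T v by (simp add: lin_mminus lin_minus vc ST TS)
  show ?thesis unfolding l by (rule eq_vecI, insert c v Sg X Y, auto)
qed

end


lemma cadd_left: fixes a b c :: "complex vec"
  assumes "a \<in> carrier_vec n" "b \<in> carrier_vec n" "c \<in> carrier_vec n"
  shows "(a + b) \<bullet>c c = a \<bullet>c c + b \<bullet>c c"
  using assms by (simp add: scalar_prod_def sum.distrib algebra_simps)

lemma cadd_right: fixes a b c :: "complex vec"
  assumes "a \<in> carrier_vec n" "b \<in> carrier_vec n" "c \<in> carrier_vec n"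
  shows "a \<bullet>c (b + c) = a \<bullet>c b + a \<bullet>c c"
  using assms by (simp add: scalar_prod_def sum.distrib algebra_simps)

lemma psd_re:
  assumes "pos_semidef n P" "v \<in> carrier_vec n"
  shows "0 \<le> Re ((P *\<^sub>v v) \<bullet>c v)"
proof -
  have P: "P \<in> carrier_mat n n" using assms unfolding pos_semidef_def by auto
  have "0 \<le> Re (((P + adj P) *\<^sub>v v) \<bullet>c v)" using assms unfolding pos_semidef_def hpsd_def by auto
  thus ?thesis using re_herm_part[OF P assms(2)] by simp
qed

lemma pd_re:
  assumes "pos_def n K" "x \<in> carrier_vec n" "x \<noteq> 0\<^sub>v n"
  shows "0 < Re ((K *\<^sub>v x) \<bullet>c x)"
proof -
  have K: "K \<in> carrier_mat n n" using assms unfolding pos_def_def by auto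
  have "0 < Re (((K + adj K) *\<^sub>v x) \<bullet>c x)" using assms unfolding pos_def_def hpd_def by auto
  thus ?thesis using re_herm_part[OF K assms(2)] by simp
qed

lemma hpd_inj:
  assumes "hpd n H" "v \<in> carrier_vec n" "H *\<^sub>v v = 0\<^sub>v n"
  shows "v = 0\<^sub>v n"
proof (rule ccontr)
  assume "v \<noteq> 0\<^sub>v n"
  hence "0 < Re ((H *\<^sub>v v) \<bullet>c v)" using assms unfolding hpd_def by auto
  thus False using assms(2,3) by simp
qed

lemma sum_inj:
  assumes hS: "hpd n Sg" and P: "pos_semidef n P" and v: "v \<in> carrier_vec n" and z: "(Sg + P) *\<^sub>v v = 0\<^sub>v n"
  shows "v = 0\<^sub>v n"
proof (rule ccontr)
  assume v0: "v \<noteq> 0\<^sub>v n"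
  have Sg: "Sg \<in> carrier_mat n n" using hS unfolding hpd_def by auto
  have Pc: "P \<in> carrier_mat n n" using P unfolding pos_semidef_def by auto
  have "0 < Re ((Sg *\<^sub>v v) \<bullet>c v)" using hS v v0 unfolding hpd_def by auto
  moreover have "0 \<le> Re ((P *\<^sub>v v) \<bullet>c v)" by (rule psd_re[OF P v])
  moreover have "((Sg + P) *\<^sub>v v) \<bullet>c v = (Sg *\<^sub>v v) \<bullet>c v + (P *\<^sub>v v) \<bullet>c v"
    unfolding lin_madd[OF Sg Pc v] by (rule cadd_left[OF vc[OF Sg v] vc[OF Pc v] v])
  moreover have "((Sg + P) *\<^sub>v v) \<bullet>c v = 0" using z v by simp
  ultimately have "Re ((Sg *\<^sub>v v) \<bullet>c v + (P *\<^sub>v v) \<bullet>c v) = 0" by simp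
  hence "Re ((Sg *\<^sub>v v) \<bullet>c v) + Re ((P *\<^sub>v v) \<bullet>c v) = 0" by simp
  with \<open>0 < Re ((Sg *\<^sub>v v) \<bullet>c v)\<close> \<open>0 \<le> Re ((P *\<^sub>v v) \<bullet>c v)\<close> show False by simp
qed

theorem corollary3p5:
  fixes n :: nat and A P1 P2 \<Sigma> :: "complex mat"
  assumes n: "0 < n"
    and A: "A \<in> carrier_mat n n" and A_nonsing: "invertible_mat A"
    and split: "A = P1 + P2"
    and P1: "pos_semidef n P1" and P2: "pos_semidef n P2"
    and Sigma: "hpd n \<Sigma>"
    and K_pd: "let S = inv_sqrt \<Sigma>;
                   At = S * A * S; P1t = S * P1 * S; P2t = S * P2 * S
               in pos_def n (At + adj P1t * adj P2t * At)"
  shows "spectral_radius (Gamma_PPS \<Sigma> P1 P2) < 1"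
proof -
  have P1c: "P1 \<in> carrier_mat n n" using P1 unfolding pos_semidef_def by auto
  have P2c: "P2 \<in> carrier_mat n n" using P2 unfolding pos_semidef_def by auto
  have Sc: "\<Sigma> \<in> carrier_mat n n" using Sigma unfolding hpd_def by auto
  have as: "\<And>X Y Z. X \<in> carrier_mat n n \<Longrightarrow> Y \<in> carrier_mat n n \<Longrightarrow> Z \<in> carrier_mat n n \<Longrightarrow> X * Y * Z = X * (Y * Z)"
    by (rule assoc_mult_mat)
  have mc: "\<And>X Y. X \<in> carrier_mat n n \<Longrightarrow> Y \<in> carrier_mat n n \<Longrightarrow> X * Y \<in> carrier_mat n n"
    by (rule mult_carrier_mat)
  have asv: "\<And>X Y w. X \<in> carrier_mat n n \<Longrightarrow> Y \<in> carrier_mat n n \<Longrightarrow> w \<in> carrier_vec n \<Longrightarrow> (X * Y) *\<^sub>v w = X *\<^sub>v (Y *\<^sub>v w)"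
    by (rule assoc_mult_mat_vec)
  have vcn: "\<And>M w. (M :: complex mat) \<in> carrier_mat n n \<Longrightarrow> w \<in> carrier_vec n \<Longrightarrow> M *\<^sub>v w \<in> carrier_vec n"
    by (rule vc)
  define R where "R = hpd_sqrt \<Sigma>"
  have hR: "hpd n R" and RR: "R * R = \<Sigma>" using hpd_sqrt[OF Sigma] unfolding R_def by auto
  have Rc: "R \<in> carrier_mat n n" using hR unfolding hpd_def by auto
  obtain Ri where Ric: "Ri \<in> carrier_mat n n" and RRi: "R * Ri = 1\<^sub>m n" and RiR: "Ri * R = 1\<^sub>m n"
    using inj_inverse[OF Rc hpd_inj[OF hR]] by blast
  define S where "S = inv_sqrt \<Sigma>"
  have SRi: "S = Ri" unfolding S_def inv_sqrt_def R_def[symmetric] by (rule minv_eq[OF Rc Ric RRi RiR])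
  have S: "S \<in> carrier_mat n n" and RS: "R * S = 1\<^sub>m n" and SR: "S * R = 1\<^sub>m n" using Ric RRi RiR SRi by auto
  have RSv: "R *\<^sub>v (S *\<^sub>v w) = w" if "w \<in> carrier_vec n" for w
    using asv[OF Rc S that] RS that by simp
  have SRv: "S *\<^sub>v (R *\<^sub>v w) = w" if "w \<in> carrier_vec n" for w
    using asv[OF S Rc that] SR that by simp
  define T where "T = S * S"
  have T: "T \<in> carrier_mat n n" unfolding T_def by (rule mc[OF S S])
  have Tv: "T *\<^sub>v w = S *\<^sub>v (S *\<^sub>v w)" if "w \<in> carrier_vec n" for w
    unfolding T_def using asv[OF S S that] .
  have Sgv: "\<Sigma> *\<^sub>v w = R *\<^sub>v (R *\<^sub>v w)" if "w \<in> carrier_vec n" for w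
    unfolding RR[symmetric] using asv[OF Rc Rc that] .
  have ST: "\<Sigma> *\<^sub>v (T *\<^sub>v w) = w" if w: "w \<in> carrier_vec n" for w
    using Sgv[OF vcn[OF T w]] Tv[OF w] RSv[OF w] RSv[OF vcn[OF S w]] S w vcn by simp
  have TS: "T *\<^sub>v (\<Sigma> *\<^sub>v w) = w" if w: "w \<in> carrier_vec n" for w
    using Sgv[OF w] Tv[OF vcn[OF Sc w]] SRv[OF w] SRv[OF vcn[OF Rc w]] Rc w vcn by simp
  have SP1c: "\<Sigma> + P1 \<in> carrier_mat n n" and SP2c: "\<Sigma> + P2 \<in> carrier_mat n n" using Sc P1c P2c by auto
  have SmP1c: "\<Sigma> - P1 \<in> carrier_mat n n" and SmP2c: "\<Sigma> - P2 \<in> carrier_mat n n"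
    using P1c P2c by (auto intro: minus_carrier_mat)
  obtain M1 where M1c: "M1 \<in> carrier_mat n n" and SM1: "(\<Sigma> + P1) * M1 = 1\<^sub>m n" and M1S: "M1 * (\<Sigma> + P1) = 1\<^sub>m n"
    using inj_inverse[OF SP1c sum_inj[OF Sigma P1]] by blast
  obtain M2 where M2c: "M2 \<in> carrier_mat n n" and SM2: "(\<Sigma> + P2) * M2 = 1\<^sub>m n" and M2S: "M2 * (\<Sigma> + P2) = 1\<^sub>m n"
    using inj_inverse[OF SP2c sum_inj[OF Sigma P2]] by blast
  have mi1: "minv (\<Sigma> + P1) = M1" by (rule minv_eq[OF SP1c M1c SM1 M1S])
  have mi2: "minv (\<Sigma> + P2) = M2" by (rule minv_eq[OF SP2c M2c SM2 M2S])
  define G where "G = Gamma_PPS \<Sigma> P1 P2"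
  have Geq: "G = M1 * (\<Sigma> - P2) * M2 * (\<Sigma> - P1)" unfolding G_def Gamma_PPS_def mi1 mi2 ..
  have Gc: "G \<in> carrier_mat n n" unfolding Geq by (intro mc M1c M2c SmP1c SmP2c)
  have Gv: "G *\<^sub>v w = M1 *\<^sub>v ((\<Sigma> - P2) *\<^sub>v (M2 *\<^sub>v ((\<Sigma> - P1) *\<^sub>v w)))" if w: "w \<in> carrier_vec n" for w
    unfolding Geq using M1c M2c SmP1c SmP2c w by (simp add: asv mc vcn)
  define Q1 where "Q1 = S * P1 * S"
  define Q2 where "Q2 = S * P2 * S"
  define At where "At = S * A * S"
  define K where "K = At + adj Q1 * adj Q2 * At"
  have Q1c: "Q1 \<in> carrier_mat n n" unfolding Q1_def using S P1c mc by simp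
  have Q2c: "Q2 \<in> carrier_mat n n" unfolding Q2_def using S P2c mc by simp
  have Atc: "At \<in> carrier_mat n n" unfolding At_def using S A mc by simp
  have Kpd: "pos_def n K" using K_pd unfolding K_def At_def Q1_def Q2_def S_def Let_def .
  have Q1v: "Q1 *\<^sub>v w = S *\<^sub>v (P1 *\<^sub>v (S *\<^sub>v w))" if w: "w \<in> carrier_vec n" for w
    unfolding Q1_def using S P1c w by (simp add: asv mc vcn)
  have Q2v: "Q2 *\<^sub>v w = S *\<^sub>v (P2 *\<^sub>v (S *\<^sub>v w))" if w: "w \<in> carrier_vec n" for w
    unfolding Q2_def using S P2c w by (simp add: asv mc vcn)
  have Atv: "At *\<^sub>v w = Q1 *\<^sub>v w + Q2 *\<^sub>v w" if w: "w \<in> carrier_vec n" for w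
  proof -
    have "At *\<^sub>v w = S *\<^sub>v ((P1 + P2) *\<^sub>v (S *\<^sub>v w))" unfolding At_def split using S P1c P2c w by (simp add: asv mc vcn)
    also have "\<dots> = Q1 *\<^sub>v w + Q2 *\<^sub>v w" unfolding Q1v[OF w] Q2v[OF w] 
      using S P1c P2c w by (simp add: lin_madd lin_add vcn)
    finally show ?thesis .
  qed
  have Kform: "(K *\<^sub>v x) \<bullet>c x = (Q1 *\<^sub>v x + Q2 *\<^sub>v x) \<bullet>c (x + Q2 *\<^sub>v (Q1 *\<^sub>v x))" if x: "x \<in> carrier_vec n" for x
  proof -
    define y where "y = Q1 *\<^sub>v x + Q2 *\<^sub>v x"
    have y: "y \<in> carrier_vec n" unfolding y_def using Q1c Q2c x vcn by simp
    have aQ1: "adj Q1 \<in> carrier_mat n n" and aQ2: "adj Q2 \<in> carrier_mat n n" using Q1c Q2c by auto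
    have "K *\<^sub>v x = At *\<^sub>v x + adj Q1 *\<^sub>v (adj Q2 *\<^sub>v (At *\<^sub>v x))"
      unfolding K_def using Atc aQ1 aQ2 x 
      by (simp add: lin_madd asv mc vcn)
    also have "At *\<^sub>v x = y" unfolding y_def by (rule Atv[OF x])
    finally have Kx: "K *\<^sub>v x = y + adj Q1 *\<^sub>v (adj Q2 *\<^sub>v y)" .
    have "(K *\<^sub>v x) \<bullet>c x = y \<bullet>c x + (adj Q1 *\<^sub>v (adj Q2 *\<^sub>v y)) \<bullet>c x"
      unfolding Kx by (rule cadd_left[OF y vcn[OF aQ1 vcn[OF aQ2 y]] x])
    also have "(adj Q1 *\<^sub>v (adj Q2 *\<^sub>v y)) \<bullet>c x = (adj Q2 *\<^sub>v y) \<bullet>c (Q1 *\<^sub>v x)"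
      using adj_inner[OF aQ1 vcn[OF aQ2 y] x] by simp
    also have "\<dots> = y \<bullet>c (Q2 *\<^sub>v (Q1 *\<^sub>v x))"
      using adj_inner[OF aQ2 y vcn[OF Q1c x]] by simp
    also have "y \<bullet>c x + y \<bullet>c (Q2 *\<^sub>v (Q1 *\<^sub>v x)) = y \<bullet>c (x + Q2 *\<^sub>v (Q1 *\<^sub>v x))"
      using cadd_right[OF y x vcn[OF Q2c vcn[OF Q1c x]]] by simp
    finally show ?thesis unfolding y_def .
  qed
  have main: "cmod \<mu> < 1" if mu: "\<mu> \<in> spectrum G" for \<mu>
  proof -
    from mu obtain v where ev: "eigenvector G v \<mu>" unfolding spectrum_def eigenvalue_def by auto
    have v: "v \<in> carrier_vec n" and v0: "v \<noteq> 0\<^sub>v n" and Gvm: "G *\<^sub>v v = \<mu> \<cdot>\<^sub>v v"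
      using ev Gc unfolding eigenvector_def by auto
    define u where "u = M2 *\<^sub>v ((\<Sigma> - P1) *\<^sub>v v)"
    have u: "u \<in> carrier_vec n" unfolding u_def using M2c SmP1c v vcn by simp
    have E1: "(\<Sigma> + P2) *\<^sub>v u = (\<Sigma> - P1) *\<^sub>v v"
      unfolding u_def using asv[OF SP2c M2c vcn[OF SmP1c v]] SM2 vcn[OF SmP1c v] by simp
    have E2: "(\<Sigma> - P2) *\<^sub>v u = \<mu> \<cdot>\<^sub>v ((\<Sigma> + P1) *\<^sub>v v)"
    proof -
      define w where "w = (\<Sigma> - P2) *\<^sub>v u"
      have w: "w \<in> carrier_vec n" unfolding w_def using SmP2c u vcn by simp
      have "M1 *\<^sub>v w = \<mu> \<cdot>\<^sub>v v" using Gv[OF v] Gvm unfolding w_def u_def by simp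
      hence "(\<Sigma> + P1) *\<^sub>v (M1 *\<^sub>v w) = (\<Sigma> + P1) *\<^sub>v (\<mu> \<cdot>\<^sub>v v)" by simp
      moreover have "(\<Sigma> + P1) *\<^sub>v (M1 *\<^sub>v w) = w" using asv[OF SP1c M1c w] SM1 w by simp
      ultimately show ?thesis unfolding w_def using lin_smult[OF SP1c v] by simp
    qed
    define c where "c = (\<Sigma> + P2) *\<^sub>v (T *\<^sub>v ((\<Sigma> + P1) *\<^sub>v v))"
    define d where "d = (\<Sigma> - P2) *\<^sub>v (T *\<^sub>v ((\<Sigma> - P1) *\<^sub>v v))"
    have c: "c \<in> carrier_vec n" unfolding c_def using SP1c SP2c T v vcn by simp
    have dmu: "d = \<mu> \<cdot>\<^sub>v c"
    proof -
      have "d = (\<Sigma> - P2) *\<^sub>v (T *\<^sub>v ((\<Sigma> + P2) *\<^sub>v u))" unfolding d_def E1 ..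
      also have "\<dots> = (\<Sigma> + P2) *\<^sub>v (T *\<^sub>v ((\<Sigma> - P2) *\<^sub>v u))"
        by (rule sym_lemma[OF Sc T ST TS P2c u])
      also have "\<dots> = (\<Sigma> + P2) *\<^sub>v (T *\<^sub>v (\<mu> \<cdot>\<^sub>v ((\<Sigma> + P1) *\<^sub>v v)))" unfolding E2 ..
      also have "\<dots> = \<mu> \<cdot>\<^sub>v c" unfolding c_def
        using lin_smult[OF T vcn[OF SP1c v]] lin_smult[OF SP2c vcn[OF T vcn[OF SP1c v]]] by simp
      finally show ?thesis .
    qed
    define x where "x = R *\<^sub>v v"
    have x: "x \<in> carrier_vec n" unfolding x_def using Rc v vcn by simp
    have x0: "x \<noteq> 0\<^sub>v n"
    proof
      assume "x = 0\<^sub>v n"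
      hence "v = S *\<^sub>v 0\<^sub>v n" using SRv[OF v] unfolding x_def by simp
      thus False using v0 mv_zero[OF S] by simp
    qed
    define y where "y = Q1 *\<^sub>v x + Q2 *\<^sub>v x"
    define z where "z = x + Q2 *\<^sub>v (Q1 *\<^sub>v x)"
    have y: "y \<in> carrier_vec n" unfolding y_def using Q1c Q2c x vcn by simp
    have z: "z \<in> carrier_vec n" unfolding z_def using Q1c Q2c x vcn by simp
    have xS: "x = S *\<^sub>v (\<Sigma> *\<^sub>v v)" unfolding x_def Sgv[OF v] using SRv[OF vcn[OF Rc v]] by simp
    have Q1x: "Q1 *\<^sub>v x = S *\<^sub>v (P1 *\<^sub>v v)" using Q1v[OF x] SRv[OF v] unfolding x_def by simp
    have Q2x: "Q2 *\<^sub>v x = S *\<^sub>v (P2 *\<^sub>v v)" using Q2v[OF x] SRv[OF v] unfolding x_def by simp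
    have Q21x: "Q2 *\<^sub>v (Q1 *\<^sub>v x) = S *\<^sub>v (P2 *\<^sub>v (T *\<^sub>v (P1 *\<^sub>v v)))"
      using Q2v[OF vcn[OF Q1c x]] Tv[OF vcn[OF P1c v]] unfolding Q1x by simp
    have cexp: "c = \<Sigma> *\<^sub>v v + P2 *\<^sub>v (T *\<^sub>v (P1 *\<^sub>v v)) + (P1 *\<^sub>v v + P2 *\<^sub>v v)"
      unfolding c_def by (rule expand_pp[OF Sc T ST TS P1c P2c v])
    have dexp: "d = \<Sigma> *\<^sub>v v + P2 *\<^sub>v (T *\<^sub>v (P1 *\<^sub>v v)) - (P1 *\<^sub>v v + P2 *\<^sub>v v)"
      unfolding d_def by (rule expand_mm[OF Sc T ST TS P1c P2c v])
    have cv: "\<Sigma> *\<^sub>v v \<in> carrier_vec n" "P1 *\<^sub>v v \<in> carrier_vec n" "P2 *\<^sub>v v \<in> carrier_vec n"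
      "P2 *\<^sub>v (T *\<^sub>v (P1 *\<^sub>v v)) \<in> carrier_vec n"
      using Sc P1c P2c T v vcn by auto
    have zS: "z = S *\<^sub>v (\<Sigma> *\<^sub>v v) + S *\<^sub>v (P2 *\<^sub>v (T *\<^sub>v (P1 *\<^sub>v v)))"
      unfolding z_def Q21x using xS by simp
    have yS: "y = S *\<^sub>v (P1 *\<^sub>v v) + S *\<^sub>v (P2 *\<^sub>v v)" unfolding y_def Q1x Q2x ..
    have zyp: "z + y = S *\<^sub>v c"
      unfolding cexp zS yS using cv S 
      apply (simp add: lin_add vcn)
      apply (rule eq_vecI)
      apply (auto simp: vcn)
      done
    have zym: "z - y = S *\<^sub>v d"
      unfolding dexp zS yS using cv S 
      by (simp add: lin_add lin_minus vcn)
    have rel: "z - y = \<mu> \<cdot>\<^sub>v (z + y)" unfolding zym zyp dmu using lin_smult[OF S c] .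
    define a where "a = z + y"
    have a: "a \<in> carrier_vec n" unfolding a_def using z y by simp
    have pos: "0 < Re (y \<bullet>c z)" using pd_re[OF Kpd x x0] Kform[OF x] unfolding y_def z_def by simp
    have "Re (a \<bullet>c a) - Re ((\<mu> \<cdot>\<^sub>v a) \<bullet>c (\<mu> \<cdot>\<^sub>v a)) = 4 * Re (y \<bullet>c z)"
      using quad_diff[OF z y] rel unfolding a_def by simp
    also have "(\<mu> \<cdot>\<^sub>v a) \<bullet>c (\<mu> \<cdot>\<^sub>v a) = \<mu> * cnj \<mu> * (a \<bullet>c a)" by (rule cscalar_smult[OF a a])
    also have "\<mu> * cnj \<mu> = complex_of_real ((cmod \<mu>)\<^sup>2)" by (rule complex_norm_square[symmetric])
    finally have eq: "Re (a \<bullet>c a) - (cmod \<mu>)\<^sup>2 * Re (a \<bullet>c a) = 4 * Re (y \<bullet>c z)" by simp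
    have N: "0 \<le> Re (a \<bullet>c a)" using conjugate_square_ge_0_vec[of a] by (simp add: less_eq_complex_def)
    have "0 < (1 - (cmod \<mu>)\<^sup>2) * Re (a \<bullet>c a)" using eq pos by (simp add: algebra_simps)
    hence "0 < 1 - (cmod \<mu>)\<^sup>2" using N by (simp add: zero_less_mult_iff)
    hence "(cmod \<mu>)\<^sup>2 < 1\<^sup>2" by simp
    thus "cmod \<mu> < 1" by (rule power_less_imp_less_base, simp)
  qed
  have "spectral_radius G \<in> norm ` spectrum G" by (rule spectral_radius_mem_max(1)[OF Gc n])
  then obtain \<mu> where "\<mu> \<in> spectrum G" "spectral_radius G = cmod \<mu>" by auto
  thus ?thesis using main unfolding G_def by simp
qed

end
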